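(* Let $\kappa$ be a Mahlo cardinal, or more generally a strongly inaccessible cardinal such that $S^\kappa_{\mathrm{pr}}$ is stationary in $\kappa$. Then $\mathrm{add}(\mathbf{nst}^{\mathrm{pr}}_\kappa)\le\mathfrak d_\kappa$.
   Context: For a cardinal $\lambda$, $S^\lambda_{\mathrm{inc}}$ is the set of strongly inaccessible cardinals below $\lambda$. A set $S\subseteq\lambda$ is nowhere stationary if for every $\delta\le\lambda$ of uncountable cofinality, $S\cap\delta$ is nonstationary in $\delta$. By induction on strongly inaccessible $\lambda$ one defines a forcing $\mathbb Q_\lambda$ and an ideal $\mathrm{id}(\mathbb Q_\lambda)$ on $2^\lambda$: $p\in\mathbb Q_\lambda$ iff $p\subseteq 2^{<\lambda}$ is closed under initial segments and there is a witness $(\tau,S,\langle N_\delta:\delta\in S\rangle)$ with: (i) $\tau$ is the trunk of $p$, the least node of $p$ having two immediate successors in $p$; (ii) if $\tau\trianglelefteq\eta\in p$ then $\eta^\frown0,\eta^\frown1\in p$; (iii) $S\subseteq S^\lambda_{\mathrm{inc}}$ is nowhere stationary; (iv) $N_\delta\in\mathrm{id}(\mathbb Q_\delta)$ for $\delta\in S$; (v) for limit $\delta<\lambda$ with $\delta\notin S$ and $\eta\in2^\delta$: $\eta\in p$ iff $\eta\restriction\sigma\in p$ for all $\sigma<\delta$; (vi) for $\delta\in S$ and $\eta\in 2^\delta$: $\eta\in p$ iff $\eta\restriction\sigma\in p$ for all $\sigma<\delta$ and $\eta\notin N_\delta$. The order is $q\le p$ iff $q\subseteq p$. $[p]$ is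 the set of $x\in 2^\lambda$ all of whose proper initial segments lie in $p$; for $\mathcal J\subseteq\mathbb Q_\lambda$, $\mathrm{set}_0(\mathcal J)=2^\lambda\setminus\bigcup_{p\in\mathcal J}[p]$. $A\in\mathrm{id}(\mathbb Q_\lambda)$ iff there are at most $\lambda$ predense sets $\mathcal J_i\subseteq\mathbb Q_\lambda$ with $A\subseteq\bigcup_i\mathrm{set}_0(\mathcal J_i)$. $\Pr(\lambda)$ means: there is a family $\{\Lambda_i:i<\lambda\}$ of maximal antichains of $\mathbb Q_\lambda$ such that no $p\in\mathbb Q_\lambda$ satisfies $[p]\subseteq\bigcap_{i<\lambda}\bigcup_{q\in\Lambda_i}[q]$; $S^\kappa_{\mathrm{pr}}=\{\lambda\in S^\kappa_{\mathrm{inc}}:\Pr(\lambda)\}$. $\mathbf{nst}^{\mathrm{pr}}_\kappa$ is the family of nowhere stationary subsets of $S^\kappa_{\mathrm{pr}}$, ordered by $\subseteq^*$ (inclusion modulo a bounded subset of $\kappa$); $\mathrm{add}(\mathbf{nst}^{\mathrm{pr}}_\kappa)$ is the least size of a subfamily having no $\subseteq^*$-upper bound in $\mathbf{nst}^{\mathrm{pr}}_\kappa$. $\mathfrak d_\kappa$ is the least size of a family $D\subseteq\kappa^\kappa$ such that every $\eta\in\kappa^\kappa$ satisfies $\eta\le^*\nu$ for some $\nu\in D$, where $f\le^*g$ means $f(i)\le g(i)$ for all but boundedly many $i<\kappa$. *)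

theory Defs
  imports Main "HOL-Library.Countable_Set"
begin

text \<open>Ordinals up to kappa are modelled as elements of a well-ordered type 'k;
  an ordinal alpha is identified with the set of its predecessors.\<close>

type_synonym 'k bseq = "'k \<times> ('k \<Rightarrow> bool)"

definition is_limit :: "'k::wellorder \<Rightarrow> bool" where
  "is_limit \<delta> \<longleftrightarrow> (\<exists>\<beta>. \<beta> < \<delta>) \<and> (\<forall>\<beta><\<delta>. \<exists>\<gamma>. \<beta> < \<gamma> \<and> \<gamma> < \<delta>)"

definition unbounded_in :: "'k::wellorder \<Rightarrow> 'k set \<Rightarrow> bool" where
  "unbounded_in \<delta> A \<longleftrightarrow> (\<forall>\<beta><\<delta>. \<exists>a\<in>A. \<beta> \<le> a)"

definition club_in :: "'k::wellorder \<Rightarrow> 'k set \<Rightarrow> bool" where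
  "club_in \<delta> C \<longleftrightarrow> C \<subseteq> {x. x < \<delta>} \<and> unbounded_in \<delta> C \<and>
     (\<forall>\<gamma><\<delta>. is_limit \<gamma> \<and> unbounded_in \<gamma> (C \<inter> {x. x < \<gamma>}) \<longrightarrow> \<gamma> \<in> C)"

definition stationary_in :: "'k::wellorder \<Rightarrow> 'k set \<Rightarrow> bool" where
  "stationary_in \<delta> S \<longleftrightarrow> (\<forall>C. club_in \<delta> C \<longrightarrow> S \<inter> C \<noteq> {})"

definition uncountable_cof :: "'k::wellorder \<Rightarrow> bool" where
  "uncountable_cof \<delta> \<longleftrightarrow>
     (\<forall>A \<subseteq> {x. x < \<delta>}. countable A \<longrightarrow> (\<exists>\<beta><\<delta>. \<forall>a\<in>A. a < \<beta>))"

definition nowhere_stationary :: "'k::wellorder \<Rightarrow> 'k set \<Rightarrow> bool" where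
  "nowhere_stationary lam S \<longleftrightarrow> S \<subseteq> {x. x < lam} \<and>
     (\<forall>\<delta>\<le>lam. uncountable_cof \<delta> \<longrightarrow> \<not> stationary_in \<delta> (S \<inter> {x. x < \<delta>}))"

definition strongly_inaccessible :: "'k::wellorder \<Rightarrow> bool" where
  "strongly_inaccessible lam \<longleftrightarrow>
     \<not> countable {x. x < lam} \<and>
     (\<forall>\<alpha><lam. (card_of {x. x < \<alpha>}, card_of {x. x < lam}) \<in> ordLess) \<and>
     (\<forall>A \<subseteq> {x. x < lam}. unbounded_in lam A \<longrightarrow> (card_of A, card_of {x. x < lam}) \<in> ordIso) \<and>
     (\<forall>\<alpha><lam. (card_of (Pow {x. x < \<alpha>}), card_of {x. x < lam}) \<in> ordLess)"

definition S_inc :: "'k::wellorder \<Rightarrow> 'k set" where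
  "S_inc lam = {\<mu>. \<mu> < lam \<and> strongly_inaccessible \<mu>}"

text \<open>A sequence of length alpha is a pair (alpha, f) with f x = False for x \<ge> alpha.\<close>

definition seq_len :: "'k::wellorder \<Rightarrow> 'k bseq set" where
  "seq_len \<alpha> = {(\<beta>, f). \<beta> = \<alpha> \<and> (\<forall>x. \<alpha> \<le> x \<longrightarrow> \<not> f x)}"

definition seqs_below :: "'k::wellorder \<Rightarrow> 'k bseq set" where
  "seqs_below lam = (\<Union>\<alpha>\<in>{\<alpha>. \<alpha> < lam}. seq_len \<alpha>)"

definition restr :: "'k::wellorder bseq \<Rightarrow> 'k \<Rightarrow> 'k bseq" where
  "restr \<eta> \<beta> = (\<beta>, \<lambda>x. x < \<beta> \<and> snd \<eta> x)"

definition init_seg :: "'k::wellorder bseq \<Rightarrow> 'k bseq \<Rightarrow> bool" where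
  "init_seg \<eta> \<nu> \<longleftrightarrow> fst \<eta> \<le> fst \<nu> \<and> restr \<nu> (fst \<eta>) = \<eta>"

definition osucc :: "'k::wellorder \<Rightarrow> 'k" where
  "osucc \<alpha> = (LEAST x. \<alpha> < x)"

definition app :: "'k::wellorder bseq \<Rightarrow> bool \<Rightarrow> 'k bseq" where
  "app \<eta> i = (osucc (fst \<eta>), (snd \<eta>)(fst \<eta> := i))"

text \<open>One step of the inductive definition: given the ideals I delta for delta < lambda.
  Binary digits 0,1 are False,True.\<close>

definition Qstep :: "('k \<Rightarrow> 'k bseq set set) \<Rightarrow> 'k::wellorder \<Rightarrow> 'k bseq set set" where
  "Qstep I lam = {p. p \<subseteq> seqs_below lam \<and> (\<forall>\<eta>\<in>p. \<forall>\<nu>. init_seg \<nu> \<eta> \<longrightarrow> \<nu> \<in> p) \<and>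
     (\<exists>\<tau> S N.
        \<tau> \<in> p \<and> app \<tau> False \<in> p \<and> app \<tau> True \<in> p \<and>
        (\<forall>\<eta>\<in>p. app \<eta> False \<in> p \<and> app \<eta> True \<in> p \<longrightarrow> init_seg \<tau> \<eta>) \<and>
        (\<forall>\<eta>\<in>p. init_seg \<tau> \<eta> \<longrightarrow> app \<eta> False \<in> p \<and> app \<eta> True \<in> p) \<and>
        S \<subseteq> S_inc lam \<and> nowhere_stationary lam S \<and>
        (\<forall>\<delta>\<in>S. N \<delta> \<in> I \<delta>) \<and>
        (\<forall>\<delta><lam. is_limit \<delta> \<and> \<delta> \<notin> S \<longrightarrow>
            (\<forall>\<eta>\<in>seq_len \<delta>. \<eta> \<in> p \<longleftrightarrow> (\<forall>\<sigma><\<delta>. restr \<eta> \<sigma> \<in> p))) \<and>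
        (\<forall>\<delta>\<in>S. \<forall>\<eta>\<in>seq_len \<delta>. \<eta> \<in> p \<longleftrightarrow> (\<forall>\<sigma><\<delta>. restr \<eta> \<sigma> \<in> p) \<and> \<eta> \<notin> N \<delta>))}"

definition body :: "'k::wellorder bseq set \<Rightarrow> 'k \<Rightarrow> 'k bseq set" where
  "body p lam = {x \<in> seq_len lam. \<forall>\<sigma><lam. restr x \<sigma> \<in> p}"

definition compat :: "'a set set \<Rightarrow> 'a set \<Rightarrow> 'a set \<Rightarrow> bool" where
  "compat Q p q \<longleftrightarrow> (\<exists>r\<in>Q. r \<subseteq> p \<and> r \<subseteq> q)"

definition predense :: "'a set set \<Rightarrow> 'a set set \<Rightarrow> bool" where
  "predense Q J \<longleftrightarrow> J \<subseteq> Q \<and> (\<forall>p\<in>Q. \<exists>q\<in>J. compat Q p q)"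

definition set0 :: "'k::wellorder \<Rightarrow> 'k bseq set set \<Rightarrow> 'k bseq set" where
  "set0 lam J = seq_len lam - (\<Union>p\<in>J. body p lam)"

definition idstep :: "'k::wellorder bseq set set \<Rightarrow> 'k \<Rightarrow> 'k bseq set set" where
  "idstep Q lam = {A. A \<subseteq> seq_len lam \<and>
     (\<exists>I J. I \<subseteq> {i. i < lam} \<and> (\<forall>i\<in>I. predense Q (J i)) \<and> A \<subseteq> (\<Union>i\<in>I. set0 lam (J i)))}"

definition idQ :: "'k::wellorder \<Rightarrow> 'k bseq set set" where
  "idQ = wfrec {(x, y). x < y} (\<lambda>rec lam. idstep (Qstep rec lam) lam)"

definition QQ :: "'k::wellorder \<Rightarrow> 'k bseq set set" where
  "QQ lam = Qstep idQ lam"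

definition antichain :: "'a set set \<Rightarrow> 'a set set \<Rightarrow> bool" where
  "antichain Q A \<longleftrightarrow> A \<subseteq> Q \<and> (\<forall>p\<in>A. \<forall>q\<in>A. p \<noteq> q \<longrightarrow> \<not> compat Q p q)"

definition maximal_antichain :: "'a set set \<Rightarrow> 'a set set \<Rightarrow> bool" where
  "maximal_antichain Q A \<longleftrightarrow> antichain Q A \<and> (\<forall>p\<in>Q. \<exists>q\<in>A. compat Q p q)"

definition Pr :: "'k::wellorder \<Rightarrow> bool" where
  "Pr lam \<longleftrightarrow> (\<exists>\<Lambda>. (\<forall>i<lam. maximal_antichain (QQ lam) (\<Lambda> i)) \<and>
     \<not> (\<exists>p\<in>QQ lam. body p lam \<subseteq> (\<Inter>i\<in>{i. i < lam}. \<Union>q\<in>\<Lambda> i. body q lam)))"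

definition S_pr :: "'k::wellorder \<Rightarrow> 'k set" where
  "S_pr \<kappa> = {lam \<in> S_inc \<kappa>. Pr lam}"

definition nst_pr :: "'k::wellorder \<Rightarrow> 'k set set" where
  "nst_pr \<kappa> = {S. S \<subseteq> S_pr \<kappa> \<and> nowhere_stationary \<kappa> S}"

definition subset_star :: "'k::wellorder \<Rightarrow> 'k set \<Rightarrow> 'k set \<Rightarrow> bool" where
  "subset_star \<kappa> A B \<longleftrightarrow> (\<exists>\<beta><\<kappa>. \<forall>x\<in>A - B. x < \<beta>)"

text \<open>A subfamily of nst^pr_kappa with no subset_star-upper bound in nst^pr_kappa;
  add(nst^pr_kappa) is the least cardinality of such a family.\<close>
definition unbounded_family :: "'k::wellorder \<Rightarrow> 'k set set \<Rightarrow> bool" where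
  "unbounded_family \<kappa> F \<longleftrightarrow> F \<subseteq> nst_pr \<kappa> \<and> \<not> (\<exists>B\<in>nst_pr \<kappa>. \<forall>A\<in>F. subset_star \<kappa> A B)"

text \<open>kappa^kappa, normalized to take the value kappa outside kappa.\<close>
definition kfuns :: "'k::wellorder \<Rightarrow> ('k \<Rightarrow> 'k) set" where
  "kfuns \<kappa> = {f. (\<forall>x<\<kappa>. f x < \<kappa>) \<and> (\<forall>x. \<kappa> \<le> x \<longrightarrow> f x = \<kappa>)}"

definition le_star :: "'k::wellorder \<Rightarrow> ('k \<Rightarrow> 'k) \<Rightarrow> ('k \<Rightarrow> 'k) \<Rightarrow> bool" where
  "le_star \<kappa> f g \<longleftrightarrow> (\<exists>\<beta><\<kappa>. \<forall>i. \<beta> \<le> i \<and> i < \<kappa> \<longrightarrow> f i \<le> g i)"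

text \<open>d_kappa is the least cardinality of a dominating family.\<close>
definition dominating :: "'k::wellorder \<Rightarrow> ('k \<Rightarrow> 'k) set \<Rightarrow> bool" where
  "dominating \<kappa> D \<longleftrightarrow> D \<subseteq> kfuns \<kappa> \<and> (\<forall>\<eta>\<in>kfuns \<kappa>. \<exists>\<nu>\<in>D. le_star \<kappa> \<eta> \<nu>)"

end

theory Submission
  imports Defs
begin

lemma ucof_limit:
  fixes \<delta> :: "'k::wellorder"
  assumes "uncountable_cof \<delta>"
  shows "is_limit \<delta>"
proof -
  have "\<exists>\<beta><\<delta>. True"
    using assms[unfolded uncountable_cof_def, rule_format, of "{}"] by auto
  moreover have "\<exists>\<gamma>. \<beta> < \<gamma> \<and> \<gamma> < \<delta>" if "\<beta> < \<delta>" for \<beta>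
    using assms[unfolded uncountable_cof_def, rule_format, of "{\<beta>}"] that by auto
  ultimately show ?thesis unfolding is_limit_def by auto
qed

lemma inacc_ucof:
  fixes \<kappa> :: "'k::wellorder"
  assumes "strongly_inaccessible \<kappa>"
  shows "uncountable_cof \<kappa>"
  unfolding uncountable_cof_def
proof (intro allI impI)
  fix A assume A: "A \<subseteq> {x. x < \<kappa>}" "countable A"
  show "\<exists>\<beta><\<kappa>. \<forall>a\<in>A. a < \<beta>"
  proof (rule ccontr)
    assume "\<not> ?thesis"
    hence "unbounded_in \<kappa> A" unfolding unbounded_in_def by (meson not_le)
    hence "(card_of A, card_of {x. x < \<kappa>}) \<in> ordIso" using assms A unfolding strongly_inaccessible_def by blast
    then obtain g where "bij_betw g A {x. x < \<kappa>}" using card_of_ordIso by blast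
    hence "countable {x. x < \<kappa>}" using A(2) by (metis bij_betw_imp_surj_on countable_image)
    thus False using assms unfolding strongly_inaccessible_def by blast
  qed
qed

lemma inacc_small_bounded:
  fixes \<kappa> :: "'k::wellorder"
  assumes "strongly_inaccessible \<kappa>" "A \<subseteq> {x. x < \<kappa>}" "(card_of A, card_of {x. x < \<kappa>}) \<in> ordLess"
  shows "\<exists>b<\<kappa>. \<forall>a\<in>A. a < b"
proof (rule ccontr)
  assume "\<not> ?thesis"
  hence "unbounded_in \<kappa> A" unfolding unbounded_in_def by (meson not_le)
  hence "(card_of A, card_of {x. x < \<kappa>}) \<in> ordIso" using assms unfolding strongly_inaccessible_def by blast
  thus False using assms(3) not_ordLess_ordIso by blast
qed

lemma omega_lim:
  fixes \<delta> \<beta> :: "'k::wellorder"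
  assumes "uncountable_cof \<delta>" "\<beta> < \<delta>" "\<forall>x<\<delta>. x < h x \<and> h x < \<delta>"
  shows "\<exists>\<gamma><\<delta>. \<beta> < \<gamma> \<and> (\<forall>x<\<gamma>. \<exists>n. x < (h^^n) \<beta>) \<and> (\<forall>n. (h^^n) \<beta> < \<gamma>)"
proof -
  define a where "a n = (h^^n) \<beta>" for n
  have a\<delta>: "a n < \<delta>" for n
    by (induction n) (use assms in \<open>auto simp: a_def\<close>)
  have inc: "a n < a (Suc n)" for n
    using a\<delta>[of n] assms(3) by (simp add: a_def)
  have r1: "range a \<subseteq> {x. x < \<delta>}" using a\<delta> by blast
  have r2: "countable (range a)" by (intro countable_image) simp
  obtain b where b: "b < \<delta>" "\<forall>n. a n < b"
    using assms(1)[unfolded uncountable_cof_def, rule_format, OF r1 r2] by blast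
  define \<gamma> where "\<gamma> = (LEAST g. \<forall>n. a n < g)"
  have \<gamma>1: "\<forall>n. a n < \<gamma>" unfolding \<gamma>_def by (rule LeastI[of _ b]) (use b in auto)
  have "\<gamma> \<le> b" unfolding \<gamma>_def by (rule Least_le) (use b in auto)
  hence "\<gamma> < \<delta>" using b by auto
  moreover have "\<beta> < \<gamma>" using \<gamma>1[rule_format, of 0] by (simp add: a_def)
  moreover have "\<exists>n. x < a n" if "x < \<gamma>" for x
  proof (rule ccontr)
    assume "\<not> ?thesis"
    hence "a n \<le> x" for n by (meson not_le)
    hence "a n < x" for n using inc[of n] by (meson order.strict_trans2 \<open>\<And>n. a n \<le> x\<close>)
    hence "\<gamma> \<le> x" unfolding \<gamma>_def by (intro Least_le) auto
    thus False using that by auto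
  qed
  ultimately show ?thesis using \<gamma>1 unfolding a_def by blast
qed

lemma club_tail:
  fixes \<kappa> :: "'k::wellorder"
  assumes "club_in \<kappa> C" "is_limit \<kappa>" "\<beta> < \<kappa>"
  shows "club_in \<kappa> (C \<inter> {x. \<beta> < x})"
  unfolding club_in_def
proof (intro conjI allI impI)
  show "C \<inter> {x. \<beta> < x} \<subseteq> {x. x < \<kappa>}" using assms(1) unfolding club_in_def by auto
  show "unbounded_in \<kappa> (C \<inter> {x. \<beta> < x})" unfolding unbounded_in_def
  proof (intro allI impI)
    fix y assume "y < \<kappa>"
    then obtain z where z: "max y \<beta> < z" "z < \<kappa>" using assms(2,3) unfolding is_limit_def
      by (metis max_less_iff_conj)
    then obtain c where c: "c \<in> C" "z \<le> c" using assms(1) unfolding club_in_def unbounded_in_def by blast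
    have "y \<le> c" "\<beta> < c" using z c by auto
    thus "\<exists>a\<in>C \<inter> {x. \<beta> < x}. y \<le> a" using c by blast
  qed
  fix \<gamma> assume g0: "\<gamma> < \<kappa>" and g1: "is_limit \<gamma> \<and> unbounded_in \<gamma> (C \<inter> {x. \<beta> < x} \<inter> {x. x < \<gamma>})"
  note g = conjI[OF g0 g1]
  hence "unbounded_in \<gamma> (C \<inter> {x. x < \<gamma>})" unfolding unbounded_in_def by blast
  hence "\<gamma> \<in> C" using g assms(1) unfolding club_in_def by blast
  moreover obtain z where "z < \<gamma>" using g unfolding is_limit_def by blast
  then obtain c where "c \<in> C" "\<beta> < c" "c < \<gamma>" using g unfolding unbounded_in_def by blast
  ultimately show "\<gamma> \<in> C \<inter> {x. \<beta> < x}" by auto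
qed

definition Clp :: "'k::wellorder \<Rightarrow> ('k \<Rightarrow> 'k) \<Rightarrow> 'k set" where
  "Clp \<kappa> f = {\<delta>. \<delta> < \<kappa> \<and> is_limit \<delta> \<and> (\<forall>x<\<delta>. f x < \<delta>)}"

lemma Clp_club:
  fixes \<kappa> :: "'k::wellorder"
  assumes inac: "strongly_inaccessible \<kappa>" and f: "f \<in> kfuns \<kappa>"
  shows "club_in \<kappa> (Clp \<kappa> f)"
  unfolding club_in_def
proof (intro conjI allI impI)
  have uc: "uncountable_cof \<kappa>" using inac by (rule inacc_ucof)
  have lim: "is_limit \<kappa>" using uc by (rule ucof_limit)
  show "Clp \<kappa> f \<subseteq> {x. x < \<kappa>}" unfolding Clp_def by auto
  have hex: "\<exists>b. b < \<kappa> \<and> x < b \<and> (\<forall>y\<le>x. f y < b)" if xk: "x < \<kappa>" for x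
  proof -
    obtain z where z: "x < z" "z < \<kappa>" using lim xk unfolding is_limit_def by blast
    have "(card_of (f ` {y. y < z}), card_of {y. y < z}) \<in> ordLeq" by (rule card_of_image)
    also have "(card_of {y. y < z}, card_of {x. x < \<kappa>}) \<in> ordLess" using inac z unfolding strongly_inaccessible_def by blast
    finally have sm: "(card_of (f ` {y. y < z}), card_of {x. x < \<kappa>}) \<in> ordLess" .
    have "f ` {y. y < z} \<subseteq> {x. x < \<kappa>}" using f z unfolding kfuns_def by auto
    then obtain b where b: "b < \<kappa>" "\<forall>a\<in>f ` {y. y < z}. a < b"
      using inacc_small_bounded[OF inac _ sm] by blast
    show ?thesis
      by (rule exI[of _ "max b z"]) (use b z in \<open>auto simp: less_max_iff_disj\<close>)
  qed
  define h where "h x = (SOME b. b < \<kappa> \<and> x < b \<and> (\<forall>y\<le>x. f y < b))" for x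
  have h: "h x < \<kappa> \<and> x < h x \<and> (\<forall>y\<le>x. f y < h x)" if "x < \<kappa>" for x
    unfolding h_def by (rule someI_ex) (rule hex[OF that])
  show "unbounded_in \<kappa> (Clp \<kappa> f)" unfolding unbounded_in_def
  proof (intro allI impI)
    fix \<beta> assume "\<beta> < \<kappa>"
    then obtain \<gamma> where g: "\<gamma> < \<kappa>" "\<beta> < \<gamma>" "\<forall>x<\<gamma>. \<exists>n. x < (h^^n) \<beta>" "\<forall>n. (h^^n) \<beta> < \<gamma>"
      using omega_lim[OF uc, of \<beta> h] h by blast
    have "is_limit \<gamma>" unfolding is_limit_def
      using g(2,3,4) by (meson order.strict_trans)
    moreover have "f x < \<gamma>" if xg: "x < \<gamma>" for x
    proof -
      obtain n where n: "x < (h^^n) \<beta>" using g(3) xg by blast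
      have "(h^^n) \<beta> < \<kappa>" using g(1,4) by (meson order.strict_trans)
      hence "f x < h ((h^^n) \<beta>)" using h n by auto
      also have "\<dots> = (h^^Suc n) \<beta>" by simp
      finally show ?thesis using g(4) by (meson order.strict_trans)
    qed
    ultimately have "\<gamma> \<in> Clp \<kappa> f" using g unfolding Clp_def by auto
    thus "\<exists>a\<in>Clp \<kappa> f. \<beta> \<le> a" using g(2) less_imp_le by blast
  qed
  fix \<gamma> assume g0: "\<gamma> < \<kappa>" and g1: "is_limit \<gamma> \<and> unbounded_in \<gamma> (Clp \<kappa> f \<inter> {x. x < \<gamma>})"
  note g = conjI[OF g0 g1]
  have "f x < \<gamma>" if xg: "x < \<gamma>" for x
  proof -
    obtain z where "x < z" "z < \<gamma>" using g xg unfolding is_limit_def by blast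
    then obtain c where c: "c \<in> Clp \<kappa> f" "c < \<gamma>" "z \<le> c" using g unfolding unbounded_in_def by blast
    have cc: "\<forall>y<c. f y < c" using c(1) unfolding Clp_def by blast
    have "x < c" using \<open>x < z\<close> c(3) by auto
    hence "f x < c" using cc by blast
    thus ?thesis using c(2) by auto
  qed
  thus "\<gamma> \<in> Clp \<kappa> f" using g unfolding Clp_def by auto
qed

definition Xs :: "'k::wellorder \<Rightarrow> ('k \<Rightarrow> 'k) \<Rightarrow> 'k set" where
  "Xs \<kappa> f = S_pr \<kappa> \<inter> Clp \<kappa> f"

definition Af :: "'k::wellorder \<Rightarrow> ('k \<Rightarrow> 'k) \<Rightarrow> 'k set" where
  "Af \<kappa> f = {\<delta> \<in> Xs \<kappa> f. \<exists>b<\<delta>. \<forall>a\<in>Xs \<kappa> f. a < \<delta> \<longrightarrow> a \<le> b}"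

lemma Af_unbounded:
  fixes \<kappa> :: "'k::wellorder"
  assumes inac: "strongly_inaccessible \<kappa>" and st: "stationary_in \<kappa> (S_pr \<kappa>)"
    and f: "f \<in> kfuns \<kappa>" and m: "m < \<kappa>"
  shows "\<exists>\<delta>\<in>Af \<kappa> f. m < \<delta>"
proof -
  have lim: "is_limit \<kappa>" using inac inacc_ucof ucof_limit by blast
  have "club_in \<kappa> (Clp \<kappa> f \<inter> {x. m < x})"
    using club_tail[OF Clp_club[OF inac f] lim m] .
  then obtain x0 where x0: "x0 \<in> Xs \<kappa> f" "m < x0"
    using st unfolding stationary_in_def Xs_def by blast
  define x where "x = (LEAST x. x \<in> Xs \<kappa> f \<and> m < x)"
  have x: "x \<in> Xs \<kappa> f" "m < x" unfolding x_def by (rule LeastI2[of _ x0], use x0 in auto)+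
  have "a \<le> m" if "a \<in> Xs \<kappa> f" "a < x" for a
    using that not_less_Least[of a "\<lambda>x. x \<in> Xs \<kappa> f \<and> m < x"] unfolding x_def[symmetric]
    by (meson not_le)
  hence "x \<in> Af \<kappa> f" using x unfolding Af_def by blast
  thus ?thesis using x by blast
qed

lemma Af_nst:
  fixes \<kappa> :: "'k::wellorder"
  assumes inac: "strongly_inaccessible \<kappa>"
  shows "Af \<kappa> f \<in> nst_pr \<kappa>"
proof -
  let ?A = "Af \<kappa> f"
  have sub: "?A \<subseteq> S_pr \<kappa>" unfolding Af_def Xs_def by auto
  have subk: "?A \<subseteq> {x. x < \<kappa>}" unfolding Af_def Xs_def Clp_def by auto
  have "\<not> stationary_in \<delta> (?A \<inter> {x. x < \<delta>})" if uc: "uncountable_cof \<delta>" for \<delta>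
  proof (cases "unbounded_in \<delta> (?A \<inter> {x. x < \<delta>})")
    case False
    then obtain y where y: "y < \<delta>" "\<forall>a\<in>?A \<inter> {x. x < \<delta>}. a < y"
      unfolding unbounded_in_def by (meson not_le)
    have "club_in \<delta> {x. y \<le> x \<and> x < \<delta>}" unfolding club_in_def unbounded_in_def
    proof (intro conjI allI impI)
      fix b assume "b < \<delta>"
      thus "\<exists>a\<in>{x. y \<le> x \<and> x < \<delta>}. b \<le> a" using y(1)
        by (intro bexI[of _ "max b y"]) (auto simp: max_def)
    next
      fix \<gamma> assume g0: "\<gamma> < \<delta>" and g1: "is_limit \<gamma> \<and> (\<forall>b<\<gamma>. \<exists>a\<in>{x. y \<le> x \<and> x < \<delta>} \<inter> {x. x < \<gamma>}. b \<le> a)"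
      note g = conjI[OF g0 g1]
      then obtain z where "z < \<gamma>" unfolding is_limit_def by blast
      then obtain a where "y \<le> a" "a < \<gamma>" using g by blast
      thus "\<gamma> \<in> {x. y \<le> x \<and> x < \<delta>}" using g by auto
    qed auto
    moreover have "?A \<inter> {x. x < \<delta>} \<inter> {x. y \<le> x \<and> x < \<delta>} = {}" using y(2) leD by blast
    ultimately show ?thesis unfolding stationary_in_def by blast
  next
    case True
    have lim: "is_limit \<delta>" using uc by (rule ucof_limit)
    define C where "C = {\<gamma>. \<gamma> < \<delta> \<and> is_limit \<gamma> \<and> unbounded_in \<gamma> (?A \<inter> {x. x < \<gamma>})}"
    have hex: "\<exists>a. a \<in> ?A \<and> x < a \<and> a < \<delta>" if xd: "x < \<delta>" for x
    proof -
      obtain z where "x < z" "z < \<delta>" using lim xd unfolding is_limit_def by blast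
      then obtain a where "a \<in> ?A" "a < \<delta>" "z \<le> a" using True unfolding unbounded_in_def by blast
      thus ?thesis using \<open>x < z\<close> by auto
    qed
    define h where "h x = (SOME a. a \<in> ?A \<and> x < a \<and> a < \<delta>)" for x
    have h: "h x \<in> ?A \<and> x < h x \<and> h x < \<delta>" if "x < \<delta>" for x
      unfolding h_def by (rule someI_ex) (rule hex[OF that])
    have club: "club_in \<delta> C" unfolding club_in_def
    proof (intro conjI allI impI)
      show "C \<subseteq> {x. x < \<delta>}" unfolding C_def by auto
      show "unbounded_in \<delta> C" unfolding unbounded_in_def
      proof (intro allI impI)
        fix \<beta> assume "\<beta> < \<delta>"
        then obtain \<gamma> where g: "\<gamma> < \<delta>" "\<beta> < \<gamma>" "\<forall>x<\<gamma>. \<exists>n. x < (h^^n) \<beta>" "\<forall>n. (h^^n) \<beta> < \<gamma>"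
          using omega_lim[OF uc, of \<beta> h] h by blast
        have "is_limit \<gamma>" unfolding is_limit_def
          using g(2,3,4) by (meson order.strict_trans)
        moreover have "unbounded_in \<gamma> (?A \<inter> {x. x < \<gamma>})" unfolding unbounded_in_def
        proof (intro allI impI)
          fix x assume "x < \<gamma>"
          then obtain n where n: "x < (h^^n) \<beta>" using g(3) by blast
          have "(h^^n) \<beta> < \<delta>" using g(1,4) by (meson order.strict_trans)
          hence "h ((h^^n) \<beta>) \<in> ?A" "(h^^n) \<beta> < h ((h^^n) \<beta>)" using h by auto
          moreover have "h ((h^^n) \<beta>) < \<gamma>" using g(4)[rule_format, of "Suc n"] by simp
          ultimately show "\<exists>a\<in>?A \<inter> {x. x < \<gamma>}. x \<le> a" using n
            by (intro bexI[of _ "h ((h^^n) \<beta>)"]) auto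
        qed
        ultimately show "\<exists>a\<in>C. \<beta> \<le> a" using g unfolding C_def by auto
      qed
      fix \<gamma> assume g0: "\<gamma> < \<delta>" and g1: "is_limit \<gamma> \<and> unbounded_in \<gamma> (C \<inter> {x. x < \<gamma>})"
      note g = conjI[OF g0 g1]
      have "unbounded_in \<gamma> (?A \<inter> {x. x < \<gamma>})" unfolding unbounded_in_def
      proof (intro allI impI)
        fix y assume "y < \<gamma>"
        then obtain z where z: "y < z" "z < \<gamma>" using g unfolding is_limit_def by blast
        then obtain c where c: "c \<in> C" "c < \<gamma>" "z \<le> c" using g unfolding unbounded_in_def by blast
        have "y < c" using z c by auto
        then obtain a where "a \<in> ?A" "a < c" "y \<le> a" using c unfolding C_def unbounded_in_def by blast
        thus "\<exists>a\<in>?A \<inter> {x. x < \<gamma>}. y \<le> a" using c by auto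
      qed
      thus "\<gamma> \<in> C" using g unfolding C_def by auto
    qed
    have "?A \<inter> {x. x < \<delta>} \<inter> C = {}"
    proof (rule ccontr)
      assume "\<not> ?thesis"
      then obtain \<gamma> where g: "\<gamma> \<in> ?A" "\<gamma> \<in> C" by blast
      then obtain b where b: "b < \<gamma>" "\<forall>a\<in>Xs \<kappa> f. a < \<gamma> \<longrightarrow> a \<le> b" unfolding Af_def by blast
      obtain c where c: "b < c" "c < \<gamma>" using g(2) b(1) unfolding C_def is_limit_def by blast
      then obtain a where "a \<in> ?A" "a < \<gamma>" "c \<le> a" using g(2) unfolding C_def unbounded_in_def by blast
      moreover hence "a \<in> Xs \<kappa> f" unfolding Af_def by blast
      ultimately show False using b c by (meson leD order.strict_trans1 order.strict_trans2)
    qed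
    thus ?thesis using club unfolding stationary_in_def by blast
  qed
  thus ?thesis using sub subk unfolding nst_pr_def nowhere_stationary_def by blast
qed

theorem theorem5p11:
  fixes \<kappa> :: "'k::wellorder"
  assumes "strongly_inaccessible \<kappa>"
    and "stationary_in \<kappa> (S_pr \<kappa>)"
  shows "\<forall>D. dominating \<kappa> D \<longrightarrow>
           (\<exists>F. unbounded_family \<kappa> F \<and> (card_of F, card_of D) \<in> ordLeq)"
proof (intro allI impI)
  fix D assume D: "dominating \<kappa> D"
  note inac = assms(1) and st = assms(2)
  have uc: "uncountable_cof \<kappa>" using inac by (rule inacc_ucof)
  have lim: "is_limit \<kappa>" using uc by (rule ucof_limit)
  define F where "F = Af \<kappa> ` D"
  have card: "(card_of F, card_of D) \<in> ordLeq" unfolding F_def by (rule card_of_image)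
  have Fsub: "F \<subseteq> nst_pr \<kappa>" unfolding F_def using Af_nst[OF inac] by auto
  have "\<not> (\<exists>B\<in>nst_pr \<kappa>. \<forall>A\<in>F. subset_star \<kappa> A B)"
  proof
    assume "\<exists>B\<in>nst_pr \<kappa>. \<forall>A\<in>F. subset_star \<kappa> A B"
    then obtain B where B: "B \<in> nst_pr \<kappa>" "\<forall>A\<in>F. subset_star \<kappa> A B" by blast
    have "\<not> stationary_in \<kappa> (B \<inter> {x. x < \<kappa>})"
      using B(1) uc unfolding nst_pr_def nowhere_stationary_def by blast
    then obtain C where C: "club_in \<kappa> C" "B \<inter> {x. x < \<kappa>} \<inter> C = {}"
      unfolding stationary_in_def by blast
    have cex: "\<exists>c. c \<in> C \<and> x < c" if xk: "x < \<kappa>" for x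
    proof -
      obtain z where "x < z" "z < \<kappa>" using lim xk unfolding is_limit_def by blast
      then obtain c where "c \<in> C" "z \<le> c" using C unfolding club_in_def unbounded_in_def by blast
      thus ?thesis using \<open>x < z\<close> by auto
    qed
    define g where "g x = (if x < \<kappa> then (LEAST c. c \<in> C \<and> x < c) else \<kappa>)" for x
    have g: "g x \<in> C \<and> x < g x" if xk: "x < \<kappa>" for x
    proof -
      have "g x = (LEAST c. c \<in> C \<and> x < c)" using xk by (simp add: g_def)
      thus ?thesis using LeastI_ex[OF cex[OF xk]] by simp
    qed
    have Ck: "C \<subseteq> {x. x < \<kappa>}" using C unfolding club_in_def by blast
    have "\<forall>x<\<kappa>. g x < \<kappa>"
    proof (intro allI impI)
      fix x assume "x < \<kappa>"
      hence "g x \<in> C" using g by blast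
      thus "g x < \<kappa>" using Ck by auto
    qed
    moreover have "\<forall>x. \<kappa> \<le> x \<longrightarrow> g x = \<kappa>"
    proof (intro allI impI)
      fix x assume "\<kappa> \<le> x"
      thus "g x = \<kappa>" unfolding g_def by (simp add: leD)
    qed
    ultimately have "g \<in> kfuns \<kappa>" unfolding kfuns_def by blast
    then obtain f where f: "f \<in> D" "le_star \<kappa> g f" using D unfolding dominating_def by blast
    have fk: "f \<in> kfuns \<kappa>" using f D unfolding dominating_def by blast
    obtain \<beta> where \<beta>: "\<beta> < \<kappa>" "\<forall>i. \<beta> \<le> i \<and> i < \<kappa> \<longrightarrow> g i \<le> f i"
      using f(2) unfolding le_star_def by blast
    obtain \<beta>' where \<beta>': "\<beta>' < \<kappa>" "\<forall>x\<in>Af \<kappa> f - B. x < \<beta>'"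
      using B(2) f(1) unfolding F_def subset_star_def by blast
    define m where "m = max \<beta> \<beta>'"
    have m: "m < \<kappa>" using \<beta> \<beta>' unfolding m_def by simp
    obtain \<delta> where d: "\<delta> \<in> Af \<kappa> f" "m < \<delta>"
      using Af_unbounded[OF inac st fk m] by blast
    have dcl: "\<delta> \<in> Clp \<kappa> f" using d unfolding Af_def Xs_def by blast
    hence dk: "\<delta> < \<kappa>" "is_limit \<delta>" "\<forall>x<\<delta>. f x < \<delta>" unfolding Clp_def by auto
    have "unbounded_in \<delta> (C \<inter> {x. x < \<delta>})" unfolding unbounded_in_def
    proof (intro allI impI)
      fix y assume y: "y < \<delta>"
      define y' where "y' = max y \<beta>"
      have y'd: "y' < \<delta>" using y d(2) unfolding y'_def m_def by auto
      hence y'k: "y' < \<kappa>" using dk by auto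
      have "g y' \<le> f y'" using \<beta> y'k unfolding y'_def by auto
      moreover have "f y' < \<delta>" using dk y'd by auto
      ultimately have "g y' < \<delta>" by auto
      moreover have "g y' \<in> C" "y' < g y'" using g[OF y'k] by auto
      moreover have "y \<le> y'" unfolding y'_def by simp
      ultimately show "\<exists>a\<in>C \<inter> {x. x < \<delta>}. y \<le> a"
        by (intro bexI[of _ "g y'"]) auto
    qed
    hence "\<delta> \<in> C" using C(1) dk unfolding club_in_def by blast
    hence "\<delta> \<notin> B" using C(2) dk by auto
    hence "\<delta> < \<beta>'" using \<beta>' d by blast
    thus False using d(2) unfolding m_def by auto
  qed
  hence "unbounded_family \<kappa> F" using Fsub unfolding unbounded_family_def by blast
  thus "\<exists>F. unbounded_family \<kappa> F \<and> (card_of F, card_of D) \<in> ordLeq" using card by blast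
qed

end
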